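(* For $n\ge2$ and all $P,Q\in\Gamma_n$, $D_{\Psi h}(P\|Q)\le \frac98 D_{\Psi J}(P\|Q)$.
   Context: $\Gamma_n=\{P=(p_1,\dots,p_n): p_i>0,\ \sum p_i=1\}$. $h(P\|Q)=\frac12\sum_{i=1}^n(\sqrt{p_i}-\sqrt{q_i})^2$; $\Psi(P\|Q)=\sum_{i=1}^n\frac{(p_i-q_i)^2(p_i+q_i)}{p_iq_i}$; $J(P\|Q)=\sum_{i=1}^n(p_i-q_i)\ln\frac{p_i}{q_i}$. $D_{\Psi h}=\frac1{16}\Psi-h$, $D_{\Psi J}=\frac1{16}\Psi-\frac18J$. *)

theory Defs
  imports Complex_Main
begin

definition Gamma :: "nat \<Rightarrow> (nat \<Rightarrow> real) set" where
  "Gamma n = {p. (\<forall>i\<in>{1..n}. p i > 0) \<and> (\<Sum>i=1..n. p i) = 1}"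

definition hell :: "nat \<Rightarrow> (nat \<Rightarrow> real) \<Rightarrow> (nat \<Rightarrow> real) \<Rightarrow> real" where
  "hell n p q = (1/2) * (\<Sum>i=1..n. (sqrt (p i) - sqrt (q i))^2)"

definition Psi :: "nat \<Rightarrow> (nat \<Rightarrow> real) \<Rightarrow> (nat \<Rightarrow> real) \<Rightarrow> real" where
  "Psi n p q = (\<Sum>i=1..n. (p i - q i)^2 * (p i + q i) / (p i * q i))"

definition Jdiv :: "nat \<Rightarrow> (nat \<Rightarrow> real) \<Rightarrow> (nat \<Rightarrow> real) \<Rightarrow> real" where
  "Jdiv n p q = (\<Sum>i=1..n. (p i - q i) * ln (p i / q i))"

definition D_Psi_h :: "nat \<Rightarrow> (nat \<Rightarrow> real) \<Rightarrow> (nat \<Rightarrow> real) \<Rightarrow> real" where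
  "D_Psi_h n p q = Psi n p q / 16 - hell n p q"

definition D_Psi_J :: "nat \<Rightarrow> (nat \<Rightarrow> real) \<Rightarrow> (nat \<Rightarrow> real) \<Rightarrow> real" where
  "D_Psi_J n p q = Psi n p q / 16 - Jdiv n p q / 8"

end

theory Submission
  imports Defs
begin

lemma deriv_aux: "x > (0::real) \<Longrightarrow> ((\<lambda>t. t^2/36 - 1/(36*t^2) + 16/9*(t-1)/(t+1) - ln t) has_real_derivative (x/18 + 1/(18*x^3) + 32/(9*(x+1)^2) - 1/x)) (at x)"
  apply (rule derivative_eq_intros refl | simp)+
  apply (simp add: field_simps power2_eq_square power3_eq_cube power4_eq_xxxx)
  done

lemma key_mono:
  fixes a b :: real
  assumes "0 < a" "a \<le> b"
  shows "(b^2-1)*(b^2+1)/(36*b^2) + 16/9*(b-1)/(b+1) - ln b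
       \<ge> (a^2-1)*(a^2+1)/(36*a^2) + 16/9*(a-1)/(a+1) - ln a"
proof -
  let ?F = "\<lambda>t::real. (t^2-1)*(t^2+1)/(36*t^2) + 16/9*(t-1)/(t+1) - ln t"
  have "?F a \<le> ?F b"
  proof (rule DERIV_nonneg_imp_nondecreasing[OF assms(2)])
    fix x assume x: "a \<le> x" "x \<le> b"
    hence xp: "x > 0" using assms by simp
    have eq: "?F = (\<lambda>t. t^2/36 - 1/(36*t^2) + 16/9*(t-1)/(t+1) - ln t)"
    proof
      fix t :: real
      show "?F t = t^2/36 - 1/(36*t^2) + 16/9*(t-1)/(t+1) - ln t"
      proof (cases "t = 0")
        case False
        then show ?thesis
          by (simp add: divide_simps power2_eq_square) (simp add: algebra_simps)
      qed simp
    qed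
    have x1: "x + 1 \<noteq> 0" "9*x+9 \<noteq> 0" "x \<noteq> 0" using xp by simp_all
    have d: "(?F has_real_derivative (x/18 + 1/(18*x^3) + 32/(9*(x+1)^2) - 1/x)) (at x)"
      unfolding eq using deriv_aux[OF xp] .
    have "18*x^3*(x+1)^2 * (x/18 + 1/(18*x^3) + 32/(9*(x+1)^2) - 1/x)
          = x^4*(x+1)^2 + (x+1)^2 + 64*x^3 - 18*x^2*(x+1)^2"
    proof -
      have n1: "(x+1)^2 \<noteq> 0" "x^3 \<noteq> 0" "x \<noteq> 0" using xp by auto
      have A: "18*x^3*(x+1)^2*(x/18) = x^4*(x+1)^2" by (simp add: power_def)
      have B: "18*x^3*(x+1)^2*(1/(18*x^3)) = (x+1)^2" using n1 by simp
      have C: "18*x^3*(x+1)^2*(32/(9*(x+1)^2)) = 64*x^3" using n1 by simp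
      have D: "18*x^3*(x+1)^2*(1/x) = 18*x^2*(x+1)^2" using n1 by (simp add: power_def)
      show ?thesis using A B C D by (simp only: distrib_left right_diff_distrib)
    qed
    also have "\<dots> = (x-1)^4*(x^2+6*x+1)"
      by (simp add: algebra_simps power2_eq_square power3_eq_cube power4_eq_xxxx)
    finally have "18*x^3*(x+1)^2 * (x/18 + 1/(18*x^3) + 32/(9*(x+1)^2) - 1/x)
          = (x-1)^4*(x^2+6*x+1)" .
    moreover have "(x-1)^4*(x^2+6*x+1) \<ge> 0" using xp by (simp add: zero_le_even_power)
    ultimately have h0: "0 \<le> 18*x^3*(x+1)^2 * (x/18 + 1/(18*x^3) + 32/(9*(x+1)^2) - 1/x)"
      by simp
    have pos: "0 < 18*x^3*(x+1)^2" using xp by simp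
    have "(x/18 + 1/(18*x^3) + 32/(9*(x+1)^2) - 1/x) \<ge> 0"
      using h0 pos by (auto simp: zero_le_mult_iff)
    with d show "\<exists>y. (?F has_real_derivative y) (at x) \<and> 0 \<le> y" by blast
  qed
  thus ?thesis by simp
qed

lemma key:
  fixes t :: real
  assumes "t > 0"
  shows "36*(t^2-1)*ln t \<le> (t^2-1)^2*(t^2+1)/t^2 + 64*(t-1)^2"
proof -
  let ?g = "(t^2-1)*(t^2+1)/(36*t^2) + 16/9*(t-1)/(t+1)"
  have t1: "t + 1 \<noteq> 0" "9*t+9 \<noteq> 0" using assms by simp_all
  have a1: "36*(t^2-1)*(16/9*(t-1)/(t+1)) = 64*(t-1)^2"
  proof -
    have "t^2-1 = (t-1)*(t+1)" by (simp add: algebra_simps power2_eq_square)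
    thus ?thesis using t1 by (simp add: field_simps power2_eq_square)
  qed
  have a2: "36*(t^2-1)*((t^2-1)*(t^2+1)/(36*t^2)) = (t^2-1)^2*(t^2+1)/t^2"
    using assms by (simp add: field_simps power2_eq_square)
  have rhs: "(t^2-1)^2*(t^2+1)/t^2 + 64*(t-1)^2 = 36*(t^2-1)*?g"
    using a1 a2 by (simp add: distrib_left)
  have g1: "(1^2-1)*(1^2+1)/(36*1^2) + 16/9*(1-1)/(1+1) - ln (1::real) = 0" by simp
  show ?thesis
  proof (cases "t \<ge> 1")
    case True
    from key_mono[OF _ True] have "?g - ln t \<ge> 0" using g1 by simp
    moreover have "t^2 - 1 \<ge> 0" using True by (simp add: one_le_power)
    ultimately have "36*(t^2-1)*(?g - ln t) \<ge> 0" by simp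
    thus ?thesis unfolding rhs by (simp add: algebra_simps)
  next
    case False
    from key_mono[OF assms, of 1] False have "?g - ln t \<le> 0" using g1 by simp
    moreover have "t^2 - 1 \<le> 0" using False assms
      by (simp add: power_le_one)
    ultimately have "36*(t^2-1)*(?g - ln t) \<ge> 0" by (simp add: mult_nonpos_nonpos)
    thus ?thesis unfolding rhs by (simp add: algebra_simps)
  qed
qed

lemma term_nonneg:
  fixes p q :: real
  assumes "p > 0" "q > 0"
  shows "0 \<le> (p-q)^2*(p+q)/(p*q) - 18*((p-q)*ln(p/q)) + 64*(sqrt p - sqrt q)^2"
proof -
  define t where "t = sqrt p / sqrt q"
  have tp: "t > 0" using assms by (simp add: t_def)
  have t2: "t^2 = p/q" using assms by (simp add: t_def power_divide)
  have lnt: "ln (p/q) = 2 * ln t" using tp t2 ln_realpow[of t 2] by simp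
  have sp: "sqrt p = t * sqrt q" using assms by (simp add: t_def)
  have sq: "(sqrt q)^2 = q" using assms by simp
  have pe: "p = t^2 * q" using t2 assms by simp
  have "q * ((t^2-1)^2*(t^2+1)/t^2 + 64*(t-1)^2 - 36*(t^2-1)*ln t)
      = (p-q)^2*(p+q)/(p*q) - 18*((p-q)*ln(p/q)) + 64*(sqrt p - sqrt q)^2"
    unfolding lnt unfolding sp unfolding pe using tp assms sq
    by (simp add: field_simps power2_eq_square)
  moreover have "q * ((t^2-1)^2*(t^2+1)/t^2 + 64*(t-1)^2 - 36*(t^2-1)*ln t) \<ge> 0"
    using key[OF tp] assms by simp
  ultimately show ?thesis by simp
qed

theorem proposition5p12:
  fixes n :: nat and P Q :: "nat \<Rightarrow> real"
  assumes "n \<ge> 2" and "P \<in> Gamma n" and "Q \<in> Gamma n"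
  shows "D_Psi_h n P Q \<le> 9/8 * D_Psi_J n P Q"
proof -
  have pos: "\<And>i. i \<in> {1..n} \<Longrightarrow> P i > 0 \<and> Q i > 0"
    using assms(2,3) by (auto simp: Gamma_def)
  have "0 \<le> (\<Sum>i=1..n. (P i - Q i)^2*(P i + Q i)/(P i * Q i) - 18*((P i - Q i)*ln(P i/Q i))
            + 64*(sqrt (P i) - sqrt (Q i))^2)"
    by (rule sum_nonneg) (use pos term_nonneg in blast)
  also have "\<dots> = Psi n P Q - 18 * Jdiv n P Q + 128 * hell n P Q"
    unfolding Psi_def Jdiv_def hell_def
    by (simp add: sum.distrib sum_subtractf sum_distrib_left)
  finally show ?thesis unfolding D_Psi_h_def D_Psi_J_def by simp
qed

end
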